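(* Let $\sigma>0$, $t>0$, and $a\sim N(0,\sigma^2)$. Then \[ \mathbb{E}\,S_t^2(a)\ \le\ \sigma^4\sqrt{\frac{2}{\pi e}}\;t^{-2}\,e^{-t^2/(2\sigma^2)}, \] where $S_t$ is the soft thresholding operator.
   Context: The soft thresholding operator is $S_t(u)=u-t$ if $u>t$, $S_t(u)=0$ if $|u|\le t$, and $S_t(u)=u+t$ if $u<-t$. *)

theory Defs
  imports "HOL-Probability.Probability"
begin

definition soft_thresh :: "real \<Rightarrow> real \<Rightarrow> real" where
  "soft_thresh t u = (if u > t then u - t else if u < - t then u + t else 0)"

end

theory Submission
  imports Defs
begin

lemma key1: fixes v :: real assumes "0 \<le> v" shows "v * exp(-v\<^sup>2/2) \<le> exp(-1/2)"
proof -
  have "v \<le> 1 + (v\<^sup>2 - 1)/2" proof -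
    have "0 \<le> (v-1)\<^sup>2" by simp
    thus ?thesis by (simp add: power2_eq_square field_simps)
  qed
  also have "\<dots> \<le> exp ((v\<^sup>2 - 1)/2)" by (rule exp_ge_add_one_self)
  finally have "v \<le> exp ((v\<^sup>2 - 1)/2)" .
  hence "v * exp(-v\<^sup>2/2) \<le> exp ((v\<^sup>2 - 1)/2) * exp(-v\<^sup>2/2)" by (simp)
  also have "\<dots> = exp(-1/2)" by (simp add: exp_add[symmetric] field_simps)
  finally show ?thesis .
qed

lemma key2: fixes \<sigma> t y :: real assumes "\<sigma> > 0" "t > 0" "y \<ge> t"
  shows "normal_density 0 \<sigma> y * (y-t)\<^sup>2 \<le> exp(-1/2)/sqrt(2*pi) * exp(-t\<^sup>2/(2*\<sigma>\<^sup>2)) * ((y-t) * exp(-t*(y-t)/\<sigma>\<^sup>2))"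
proof -
  define u where "u = y - t"
  have u: "u \<ge> 0" using assms u_def by simp
  have y: "y = t + u" using u_def by simp
  have e: "exp(-y\<^sup>2/(2*\<sigma>\<^sup>2)) = exp(-t\<^sup>2/(2*\<sigma>\<^sup>2)) * exp(-t*u/\<sigma>\<^sup>2) * exp(-(u/\<sigma>)\<^sup>2/2)"
    using assms by (simp add: exp_add[symmetric] y power2_eq_square field_simps)
  have nd: "normal_density 0 \<sigma> y = 1/(sqrt(2*pi) * \<sigma>) * exp(-y\<^sup>2/(2*\<sigma>\<^sup>2))"
    using assms by (simp add: normal_density_def real_sqrt_mult)
  have k: "(u/\<sigma>) * exp(-(u/\<sigma>)\<^sup>2/2) \<le> exp(-1/2)" using key1[of "u/\<sigma>"] u assms by simp
  have "u\<^sup>2 * exp(-(u/\<sigma>)\<^sup>2/2) = (u * \<sigma>) * ((u/\<sigma>) * exp(-(u/\<sigma>)\<^sup>2/2))"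
    using assms by (simp add: power2_eq_square field_simps)
  also have "\<dots> \<le> (u * \<sigma>) * exp(-1/2)" by (rule mult_left_mono[OF k]) (use u assms in simp)
  finally have k2: "u\<^sup>2 * exp(-(u/\<sigma>)\<^sup>2/2) \<le> (u * \<sigma>) * exp(-1/2)" .
  have "normal_density 0 \<sigma> y * (y-t)\<^sup>2 = (exp(-t\<^sup>2/(2*\<sigma>\<^sup>2)) * exp(-t*u/\<sigma>\<^sup>2) / (sqrt(2*pi) * \<sigma>)) * (u\<^sup>2 * exp(-(u/\<sigma>)\<^sup>2/2))"
    unfolding nd e u_def[symmetric] by (simp add: field_simps)
  also have "\<dots> \<le> (exp(-t\<^sup>2/(2*\<sigma>\<^sup>2)) * exp(-t*u/\<sigma>\<^sup>2) / (sqrt(2*pi) * \<sigma>)) * ((u * \<sigma>) * exp(-1/2))"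
    by (rule mult_left_mono[OF k2]) (use assms in simp)
  also have "\<dots> = exp(-1/2)/sqrt(2*pi) * exp(-t\<^sup>2/(2*\<sigma>\<^sup>2)) * ((y-t) * exp(-t*(y-t)/\<sigma>\<^sup>2))"
    using assms by (simp add: u_def[symmetric] field_simps)
  finally show ?thesis .
qed

lemma hint: fixes \<sigma> t A :: real assumes "\<sigma> > 0" "t > 0" "A \<ge> 0"
  shows "(\<integral>\<^sup>+x. ennreal (A * ((x-t) * exp(-t*(x-t)/\<sigma>\<^sup>2)) * indicator {t..} x) \<partial>lborel) = ennreal (A * (\<sigma>\<^sup>2/t)\<^sup>2)"
proof -
  define c where "c = \<sigma>\<^sup>2/t"
  have c: "c > 0" using assms by (simp add: c_def)
  have tc: "t * (c * x) / \<sigma>\<^sup>2 = x" for x using assms by (simp add: c_def)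
  have "(\<integral>\<^sup>+x. ennreal (A * ((x-t) * exp(-t*(x-t)/\<sigma>\<^sup>2)) * indicator {t..} x) \<partial>lborel)
     = ennreal \<bar>c\<bar> * (\<integral>\<^sup>+x. ennreal (A * (((t + c*x)-t) * exp(-t*((t + c*x)-t)/\<sigma>\<^sup>2)) * indicator {t..} (t + c*x)) \<partial>lborel)"
    by (rule nn_integral_real_affine) (use c in auto)
  also have "(\<lambda>x. ennreal (A * (((t + c*x)-t) * exp(-t*((t + c*x)-t)/\<sigma>\<^sup>2)) * indicator {t..} (t + c*x)))
      = (\<lambda>x. ennreal (A*c) * (ennreal (x^1 * exp (-x)) * indicator {0..} x))"
  proof
    fix x :: real
    have "t \<le> t + c*x \<longleftrightarrow> 0 \<le> x" using c by (simp add: zero_le_mult_iff)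
    thus "ennreal (A * (((t + c*x)-t) * exp(-t*((t + c*x)-t)/\<sigma>\<^sup>2)) * indicator {t..} (t + c*x))
      = ennreal (A*c) * (ennreal (x^1 * exp (-x)) * indicator {0..} x)"
      using tc[of x] c assms by (auto simp: indicator_def ennreal_mult'[symmetric] mult_ac)
  qed
  also have "(\<integral>\<^sup>+x. ennreal (A*c) * (ennreal (x^1 * exp (-x)) * indicator {0..} x) \<partial>lborel) = ennreal (A*c) * real_of_nat (fact 1)"
  proof -
    have I1: "(\<integral>\<^sup>+x. ennreal (x^1 * exp (-x)) * indicator {0..} x \<partial>lborel) = 1"
      using nn_intergal_power_times_exp_Ici[of 1] by simp
    show ?thesis by (subst nn_integral_cmult, measurable) (subst I1, simp)
  qed
  finally show ?thesis using c assms by (simp add: c_def ennreal_mult'[symmetric] power2_eq_square)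
qed

theorem lemma4p6:
  fixes M :: "'a measure" and a :: "'a \<Rightarrow> real" and \<sigma> t :: real
  assumes "prob_space M"
    and "\<sigma> > 0" and "t > 0"
    and "distributed M lborel a (normal_density 0 \<sigma>)"
  shows "prob_space.expectation M (\<lambda>\<omega>. (soft_thresh t (a \<omega>))\<^sup>2)
           \<le> \<sigma> ^ 4 * sqrt (2 / (pi * exp 1)) * t powr (-2) * exp (- t\<^sup>2 / (2 * \<sigma>\<^sup>2))"
proof -
  define A where "A = exp(-1/2)/sqrt(2*pi) * exp(-t\<^sup>2/(2*\<sigma>\<^sup>2))"
  have A: "A \<ge> 0" by (simp add: A_def)
  define h where "h x = A * ((x-t) * exp(-t*(x-t)/\<sigma>\<^sup>2)) * indicator {t..} x" for x
  have h0: "h x \<ge> 0" for x using A by (simp add: h_def indicator_def)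
  have hm[measurable]: "h \<in> borel_measurable borel" unfolding h_def by measurable
  have Sm[measurable]: "(\<lambda>x. (soft_thresh t x)\<^sup>2) \<in> borel_measurable borel"
    unfolding soft_thresh_def by measurable
  have pt: "normal_density 0 \<sigma> x * (soft_thresh t x)\<^sup>2 \<le> h x + h (-x)" for x
  proof -
    consider "x > t" | "x < -t" | "\<not> x > t \<and> \<not> x < -t" by linarith
    then show ?thesis
    proof cases
      case 1
      then have "h (-x) = 0" using assms by (simp add: h_def)
      moreover have "normal_density 0 \<sigma> x * (soft_thresh t x)\<^sup>2 \<le> h x"
        using key2[of \<sigma> t x] 1 assms by (simp add: soft_thresh_def h_def A_def)
      ultimately show ?thesis by simp
    next
      case 2
      then have "h x = 0" using assms by (simp add: h_def)
      moreover have "normal_density 0 \<sigma> (-x) * (-x-t)\<^sup>2 \<le> h (-x)"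
        using key2[of \<sigma> t "-x"] 2 assms by (simp add: h_def A_def)
      moreover have "normal_density 0 \<sigma> (-x) = normal_density 0 \<sigma> x" by (simp add: normal_density_def)
      moreover have "(soft_thresh t x)\<^sup>2 = (-x-t)\<^sup>2" proof -
        have "\<not> x > t" using 2 assms by simp
        hence "soft_thresh t x = x + t" using 2 by (simp add: soft_thresh_def)
        thus ?thesis by (simp add: power2_eq_square algebra_simps)
      qed
      ultimately show ?thesis by simp
    next
      case 3
      then show ?thesis using h0[of x] h0[of "-x"] by (simp add: soft_thresh_def)
    qed
  qed
  interpret prob_space M by fact
  have am[measurable]: "a \<in> borel_measurable M" using distributed_measurable[OF assms(4)] by simp
  have "(\<integral>\<^sup>+\<omega>. ennreal ((soft_thresh t (a \<omega>))\<^sup>2) \<partial>M)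
      = (\<integral>\<^sup>+x. ennreal (normal_density 0 \<sigma> x) * ennreal ((soft_thresh t x)\<^sup>2) \<partial>lborel)"
    by (rule distributed_nn_integral[OF assms(4), symmetric]) measurable
  also have "\<dots> \<le> (\<integral>\<^sup>+x. ennreal (h x) + ennreal (h (-x)) \<partial>lborel)"
  proof (rule nn_integral_mono)
    fix x
    show "ennreal (normal_density 0 \<sigma> x) * ennreal ((soft_thresh t x)\<^sup>2) \<le> ennreal (h x) + ennreal (h (-x))"
      using pt[of x] h0[of x] h0[of "-x"] assms
      by (simp add: ennreal_mult'[symmetric] ennreal_plus[symmetric] del: ennreal_plus)
  qed
  also have "\<dots> = (\<integral>\<^sup>+x. ennreal (h x) \<partial>lborel) + (\<integral>\<^sup>+x. ennreal (h (-x)) \<partial>lborel)"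
    by (rule nn_integral_add) measurable
  also have "(\<integral>\<^sup>+x. ennreal (h (-x)) \<partial>lborel) = (\<integral>\<^sup>+x. ennreal (h x) \<partial>lborel)"
    using nn_integral_real_affine[of "\<lambda>x. ennreal (h x)" "-1" 0] by simp
  also have "(\<integral>\<^sup>+x. ennreal (h x) \<partial>lborel) = ennreal (A * (\<sigma>\<^sup>2/t)\<^sup>2)"
    unfolding h_def using hint[OF assms(2,3) A] .
  finally have le: "(\<integral>\<^sup>+\<omega>. ennreal ((soft_thresh t (a \<omega>))\<^sup>2) \<partial>M) \<le> ennreal (2 * (A * (\<sigma>\<^sup>2/t)\<^sup>2))"
    using A by (simp add: ennreal_plus[symmetric] del: ennreal_plus)
  have eq: "2 * (A * (\<sigma>\<^sup>2/t)\<^sup>2) = \<sigma> ^ 4 * sqrt (2 / (pi * exp 1)) * t powr (-2) * exp (- t\<^sup>2 / (2 * \<sigma>\<^sup>2))"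
  proof -
    have s1: "sqrt (2 / (pi * exp 1)) = 2 * exp(-1/2)/sqrt(2*pi)"
    proof -
      have "(2 * exp(-1/2)/sqrt(2*pi))\<^sup>2 = 2 / (pi * exp 1)"
        by (simp add: power_divide power_mult_distrib exp_of_nat_mult[symmetric] exp_minus field_simps flip: exp_add)
      thus ?thesis by (rule real_sqrt_unique) simp
    qed
    have s2: "t powr (-2) = 1 / t\<^sup>2" using assms by (simp add: powr_minus powr_numeral divide_inverse)
    show ?thesis unfolding s1 s2 A_def using assms by (simp add: power2_eq_square eval_nat_numeral field_simps)
  qed
  have "expectation (\<lambda>\<omega>. (soft_thresh t (a \<omega>))\<^sup>2) \<le> 2 * (A * (\<sigma>\<^sup>2/t)\<^sup>2)"
    by (rule integral_real_bounded) (use A le in auto)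
  thus ?thesis using eq by simp
qed

end
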